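(* Let $G$ be the final graph produced by the uncoordinated construction (described in the context) on a finite point set $P\subset\mathbb{R}^d$ with parameter $s>1$. Then: (1) For any two distinct points $p,q\in P$ such that $pq$ is not an edge of $G$, there is an edge $p'q'$ of $G$ with $|pp'|\le |p'q'|/(2s+2)$ and $|qq'|\le |p'q'|/(2s+2)$. (2) For any two distinct edges $pq$ and $p'q'$ of $G$ such that $pq$ was built before $p'q'$, either $|pp'|>|pq|/(2s+2)$ or $|qq'|>|pq|/(2s+2)$.
   Context: Fix $d\ge 1$. Let $P\subset\mathbb{R}^d$ be a finite set of $n\ge 2$ points, $|xy|$ the Euclidean distance, and $s>1$ a parameter. Uncoordinated construction: start with the graph $G$ on vertex set $P$ with no edges (edges are undirected straight segments). Every ordered pair $(p,q)$ of distinct points of $P$ is processed exactly once, in a completely arbitrary order, and no two pairs are processed simultaneously. When $(p,q)$ is processed (by agent $p$), the edge $pq$ is added to $G$ unless $G$ currently contains an edge whose endpoints can be labeled $p',q'$ so that $|pp'|\le |p'q'|/(2s+2)$ and $|qq'|\le |p'q'|/(2s+2)$; in that case $pq$ is not built. The final graph $G$ is the graph after all ordered pairs have been processed. *)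

theory Defs
  imports "HOL-Analysis.Analysis"
begin

text \<open>Undirected edges are represented as two-element sets.
  An edge e blocks the pair (p,q) if its endpoints can be labelled p',q'
  with dist p p' and dist q q' both at most dist p' q' / (2s+2).\<close>
definition blocked :: "real \<Rightarrow> 'a::euclidean_space set set \<Rightarrow> 'a \<Rightarrow> 'a \<Rightarrow> bool" where
  "blocked s E p q \<longleftrightarrow> (\<exists>p' q'. {p', q'} \<in> E \<and>
      dist p p' \<le> dist p' q' / (2 * s + 2) \<and> dist q q' \<le> dist p' q' / (2 * s + 2))"

fun uncoord :: "real \<Rightarrow> ('a::euclidean_space \<times> 'a) list \<Rightarrow> 'a set list \<Rightarrow> 'a set list" where
  "uncoord s [] B = B"
| "uncoord s ((p, q) # rest) B =
     uncoord s rest (if blocked s (set B) p q then B else B @ [{p, q}])"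

definition valid_order :: "'a set \<Rightarrow> ('a \<times> 'a) list \<Rightarrow> bool" where
  "valid_order P L \<longleftrightarrow> distinct L \<and> set L = {(p, q). p \<in> P \<and> q \<in> P \<and> p \<noteq> q}"

definition built_before :: "'a set list \<Rightarrow> 'a set \<Rightarrow> 'a set \<Rightarrow> bool" where
  "built_before B e f \<longleftrightarrow> (\<exists>i j. i < j \<and> j < length B \<and> B ! i = e \<and> B ! j = f)"

end

theory Submission
  imports Defs
begin

lemma blocked_mono: "blocked s E p q \<Longrightarrow> E \<subseteq> E' \<Longrightarrow> blocked s E' p q"
  unfolding blocked_def by blast

lemma uc_prefix: "\<exists>xs. uncoord s L B = B @ xs"
proof (induction L arbitrary: B)
  case Nil then show ?case by simp
next
  case (Cons pq rest)
  obtain p q where pq: "pq = (p, q)" by fastforce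
  show ?case
  proof (cases "blocked s (set B) p q")
    case True then show ?thesis using Cons[of B] pq by simp
  next
    case False
    obtain xs where "uncoord s rest (B @ [{p,q}]) = (B @ [{p,q}]) @ xs" using Cons by blast
    then show ?thesis using False pq by auto
  qed
qed

lemma uc_nb: "length B \<le> j \<Longrightarrow> j < length (uncoord s L B) \<Longrightarrow>
   \<exists>a b. uncoord s L B ! j = {a,b} \<and> \<not> blocked s (set (take j (uncoord s L B))) a b"
proof (induction L arbitrary: B)
  case Nil then show ?case by simp
next
  case (Cons pq rest)
  obtain p q where pq: "pq = (p, q)" by fastforce
  show ?case
  proof (cases "blocked s (set B) p q")
    case True then show ?thesis using Cons.IH[of B] Cons.prems pq by simp
  next
    case False
    let ?B' = "B @ [{p,q}]"
    have eq: "uncoord s (pq # rest) B = uncoord s rest ?B'" using False pq by simp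
    show ?thesis
    proof (cases "j = length B")
      case True
      obtain xs where xs: "uncoord s rest ?B' = ?B' @ xs" using uc_prefix by blast
      have "uncoord s rest ?B' ! j = {p,q}" using xs True by (simp add: nth_append)
      moreover have "take j (uncoord s rest ?B') = B" using xs True by simp
      ultimately show ?thesis using eq False by auto
    next
      case f2: False
      then have "length ?B' \<le> j" using Cons.prems by simp
      then show ?thesis using Cons.IH[of ?B'] Cons.prems eq by simp
    qed
  qed
qed

lemma uc_cov: "(p,q) \<in> set L \<Longrightarrow>
   {p,q} \<in> set (uncoord s L B) \<or> blocked s (set (uncoord s L B)) p q"
proof (induction L arbitrary: B)
  case Nil then show ?case by simp
next
  case (Cons pq rest)
  obtain a b where pq: "pq = (a, b)" by fastforce
  let ?B' = "if blocked s (set B) a b then B else B @ [{a, b}]"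
  have eq: "uncoord s (pq # rest) B = uncoord s rest ?B'" using pq by simp
  obtain xs where xs: "uncoord s rest ?B' = ?B' @ xs" using uc_prefix by blast
  show ?case
  proof (cases "(p,q) \<in> set rest")
    case True then show ?thesis using Cons.IH[of ?B'] eq by simp
  next
    case False
    then have "p = a" "q = b" using Cons.prems pq by auto
    show ?thesis
    proof (cases "blocked s (set B) a b")
      case True
      then have "blocked s (set (uncoord s (pq # rest) B)) a b"
        using eq xs blocked_mono[of s "set B"] by auto
      then show ?thesis using \<open>p = a\<close> \<open>q = b\<close> by simp
    next
      case f: False
      then show ?thesis using eq xs \<open>p = a\<close> \<open>q = b\<close> by auto
    qed
  qed
qed

theorem lemma1:
  fixes P :: "'a::euclidean_space set" and s :: real and L :: "('a \<times> 'a) list"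
  assumes "finite P" and "card P \<ge> 2" and "s > 1" and "valid_order P L"
  defines "B \<equiv> uncoord s L []"
  shows "(\<forall>p\<in>P. \<forall>q\<in>P. p \<noteq> q \<and> {p, q} \<notin> set B \<longrightarrow>
            (\<exists>p' q'. {p', q'} \<in> set B \<and>
               dist p p' \<le> dist p' q' / (2 * s + 2) \<and> dist q q' \<le> dist p' q' / (2 * s + 2)))
       \<and> (\<forall>p q p' q'. {p, q} \<in> set B \<and> {p', q'} \<in> set B \<and> {p, q} \<noteq> {p', q'} \<and>
            built_before B {p, q} {p', q'} \<longrightarrow>
            dist p p' > dist p q / (2 * s + 2) \<or> dist q q' > dist p q / (2 * s + 2))"
proof (intro conjI allI ballI impI)
  fix p q assume "p \<in> P" "q \<in> P" and h: "p \<noteq> q \<and> {p, q} \<notin> set B"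
  then have "(p,q) \<in> set L" using assms(4) unfolding valid_order_def by auto
  then have "blocked s (set B) p q" using uc_cov[of p q L s "[]"] h B_def by auto
  then show "\<exists>p' q'. {p', q'} \<in> set B \<and>
               dist p p' \<le> dist p' q' / (2 * s + 2) \<and> dist q q' \<le> dist p' q' / (2 * s + 2)"
    unfolding blocked_def by blast
next
  fix p q p' q'
  assume h: "{p, q} \<in> set B \<and> {p', q'} \<in> set B \<and> {p, q} \<noteq> {p', q'} \<and>
            built_before B {p, q} {p', q'}"
  then obtain i j where ij: "i < j" "j < length B" "B ! i = {p,q}" "B ! j = {p',q'}"
    unfolding built_before_def by blast
  obtain a b where ab: "B ! j = {a,b}" "\<not> blocked s (set (take j B)) a b"
    using uc_nb[of "[]" j s L] ij B_def by auto
  have "{p,q} \<in> set (take j B)" using ij by (metis in_set_conv_nth length_take min.absorb4 nth_take)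
  then have nb: "\<And>x y. {x,y} = {p,q} \<Longrightarrow> \<not> (dist a x \<le> dist x y / (2 * s + 2) \<and> dist b y \<le> dist x y / (2 * s + 2))"
    using ab(2) unfolding blocked_def by metis
  have "{a,b} = {p',q'}" using ab ij by simp
  then have "(a = p' \<and> b = q') \<or> (a = q' \<and> b = p')" by (auto simp: doubleton_eq_iff)
  then show "dist p p' > dist p q / (2 * s + 2) \<or> dist q q' > dist p q / (2 * s + 2)"
  proof
    assume "a = p' \<and> b = q'"
    then show ?thesis using nb[of p q] by (auto simp: dist_commute)
  next
    assume "a = q' \<and> b = p'"
    then show ?thesis using nb[of q p] by (auto simp: dist_commute insert_commute)
  qed
qed

end
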